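(* Let $d\ge 2$ and $k$ be integers with $1\le k\le d-1$, and let $\delta>0$. Then the function $F:\mathbb{R}^d\to\mathbb{R}^d$ defined by $$F({\bm{x}})=\mathrm{Huber}\big(\mathrm{StatTop}_k({\bm{x}});\delta\big)/\delta$$ (with $\mathrm{Huber}(\cdot;\delta)$ applied entrywise) is continuously differentiable.
   Context: For ${\bm{x}}\in\mathbb{R}^d$, let $\mathrm{mean}({\bm{x}})=\frac1d\sum_{i=1}^d x_i$ and $\mathrm{std}({\bm{x}})=\sqrt{\frac{1}{d-1}\sum_{i=1}^d (x_i-\mathrm{mean}({\bm{x}}))^2}$, and let $Q$ be the quantile function (inverse CDF) of the standard Gaussian distribution. Define the threshold $\theta({\bm{x}},k)=\mathrm{mean}({\bm{x}})+\mathrm{std}({\bm{x}})\cdot Q(1-\frac{k}{d})$. The soft-thresholding operator is $\mathrm{SoftThreshold}({\bm{x}},\theta)=\max\{{\bm{x}}-\theta\mathbf{1},\mathbf{0}\}\in\mathbb{R}^d$ (entrywise maximum, $\mathbf{1}$ the all-ones vector), and the statistical top-$k$ operator is $\mathrm{StatTop}_k({\bm{x}})=\mathrm{SoftThreshold}({\bm{x}},\theta({\bm{x}},k))$. The Huber function is, for a scalar $x$, $\mathrm{Huber}(x;\delta)=\frac12 x^2$ if $|x|<\delta$ and $\mathrm{Huber}(x;\delta)=\delta(|x|-\frac12\delta)$ otherwise. *)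

theory Defs
  imports "HOL-Probability.Probability"
begin

definition gauss_cdf :: "real \<Rightarrow> real" where
  "gauss_cdf x = (LBINT t:{..x}. std_normal_density t)"

definition gauss_quantile :: "real \<Rightarrow> real" where
  "gauss_quantile p = (THE x. gauss_cdf x = p)"

definition vmean :: "real ^ 'n \<Rightarrow> real" where
  "vmean x = (\<Sum>i\<in>UNIV. x $ i) / real CARD('n)"

definition vstd :: "real ^ 'n \<Rightarrow> real" where
  "vstd x = sqrt ((\<Sum>i\<in>UNIV. (x $ i - vmean x)\<^sup>2) / (real CARD('n) - 1))"

definition stat_threshold :: "real ^ 'n \<Rightarrow> nat \<Rightarrow> real" where
  "stat_threshold x k = vmean x + vstd x * gauss_quantile (1 - real k / real CARD('n))"

definition soft_threshold :: "real ^ 'n \<Rightarrow> real \<Rightarrow> real ^ 'n" where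
  "soft_threshold x \<theta> = (\<chi> i. max (x $ i - \<theta>) 0)"

definition stat_top :: "nat \<Rightarrow> real ^ 'n \<Rightarrow> real ^ 'n" where
  "stat_top k x = soft_threshold x (stat_threshold x k)"

definition huber :: "real \<Rightarrow> real \<Rightarrow> real" where
  "huber \<delta> x = (if \<bar>x\<bar> < \<delta> then x\<^sup>2 / 2 else \<delta> * (\<bar>x\<bar> - \<delta> / 2))"

definition C1_everywhere :: "('a::real_normed_vector \<Rightarrow> 'b::real_normed_vector) \<Rightarrow> bool" where
  "C1_everywhere f \<longleftrightarrow> (\<exists>f'. (\<forall>x. (f has_derivative blinfun_apply (f' x)) (at x)) \<and> continuous_on UNIV f')"

end

theory Submission
  imports Defs
begin

definition hh :: "real \<Rightarrow> real \<Rightarrow> real" where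
  "hh \<delta> t = huber \<delta> (max t 0) / \<delta>"

definition hd :: "real \<Rightarrow> real \<Rightarrow> real" where
  "hd \<delta> t = min (max t 0) \<delta> / \<delta>"

lemma hh_eq:
  assumes "\<delta> > 0"
  shows "hh \<delta> t = (if t \<le> 0 then 0 else if t \<le> \<delta> then t\<^sup>2 / (2*\<delta>) else t - \<delta>/2)"
  using assms by (auto simp: hh_def huber_def field_simps power2_eq_square)

lemma piece_deriv:
  fixes f p q :: "real \<Rightarrow> real"
  assumes e: "e > 0"
    and fp: "\<And>y. y \<le> a \<Longrightarrow> a - e < y \<Longrightarrow> f y = p y"
    and fq: "\<And>y. y \<ge> a \<Longrightarrow> y < a + e \<Longrightarrow> f y = q y"
    and "(p has_real_derivative D) (at a)" "(q has_real_derivative D) (at a)"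
  shows "(f has_real_derivative D) (at a)"
proof -
  have l1: "((\<lambda>y. (p y - p a) / (y - a)) \<longlongrightarrow> D) (at a within {..a})"
    using assms(4) has_field_derivative_at_within has_field_derivative_iff by blast
  have l2: "((\<lambda>y. (q y - q a) / (y - a)) \<longlongrightarrow> D) (at a within {a..})"
    using assms(5) has_field_derivative_at_within has_field_derivative_iff by blast
  have fa: "f a = p a" "f a = q a" using fp[of a] fq[of a] e by auto
  have ev1: "eventually (\<lambda>y. (p y - p a) / (y - a) = (f y - f a) / (y - a)) (at a within {..a})"
    unfolding eventually_at
    by (rule exI[of _ e]) (use e fa fp in \<open>auto simp: dist_real_def\<close>)
  have ev2: "eventually (\<lambda>y. (q y - q a) / (y - a) = (f y - f a) / (y - a)) (at a within {a..})"
    unfolding eventually_at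
    by (rule exI[of _ e]) (use e fa fq in \<open>auto simp: dist_real_def\<close>)
  have l1': "((\<lambda>y. (f y - f a) / (y - a)) \<longlongrightarrow> D) (at a within {..a})"
    by (rule tendsto_cong[THEN iffD1, OF ev1 l1])
  have l2': "((\<lambda>y. (f y - f a) / (y - a)) \<longlongrightarrow> D) (at a within {a..})"
    by (rule tendsto_cong[THEN iffD1, OF ev2 l2])
  have "((\<lambda>y. (f y - f a) / (y - a)) \<longlongrightarrow> D) (at a within ({..a} \<union> {a..}))"
    using Lim_within_Un l1' l2' by blast
  moreover have "{..a} \<union> {a..} = (UNIV::real set)" by auto
  ultimately show ?thesis using has_field_derivative_iff by metis
qed

lemma hh_deriv:
  assumes d: "\<delta> > 0"
  shows "(hh \<delta> has_real_derivative hd \<delta> t) (at t)"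
proof -
  consider "t < 0" | "t = 0" | "0 < t \<and> t < \<delta>" | "t = \<delta>" | "t > \<delta>" by linarith
  then show ?thesis
  proof cases
    case 1
    have "((\<lambda>_. 0::real) has_real_derivative hd \<delta> t) (at t)" using 1 d by (simp add: hd_def)
    then show ?thesis
      by (rule has_field_derivative_transform_within_open[where S="{..<0}"])
         (use 1 d in \<open>auto simp: hh_eq hd_def\<close>)
  next
    case 2
    show ?thesis
      apply (rule piece_deriv[where e="\<delta>" and p="\<lambda>_. 0" and q="\<lambda>y. y\<^sup>2/(2*\<delta>)"])
      using 2 d apply (auto simp: hh_eq hd_def)
      apply (auto intro!: derivative_eq_intros)
      done
  next
    case 3
    have "((\<lambda>y. y\<^sup>2/(2*\<delta>)) has_real_derivative hd \<delta> t) (at t)"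
      using 3 d by (auto intro!: derivative_eq_intros simp: hd_def)
    then show ?thesis
      by (rule has_field_derivative_transform_within_open[where S="{0<..<\<delta>}"])
         (use 3 d in \<open>auto simp: hh_eq\<close>)
  next
    case 4
    show ?thesis
      apply (rule piece_deriv[where e="\<delta>" and p="\<lambda>y. y\<^sup>2/(2*\<delta>)" and q="\<lambda>y. y - \<delta>/2"])
      using 4 d apply (auto simp: hh_eq hd_def power2_eq_square)
      apply (auto intro!: derivative_eq_intros)
      done
  next
    case 5
    have "((\<lambda>y. y - \<delta>/2) has_real_derivative hd \<delta> t) (at t)"
      using 5 d by (auto intro!: derivative_eq_intros simp: hd_def)
    then show ?thesis
      by (rule has_field_derivative_transform_within_open[where S="{\<delta><..}"])
         (use 5 d in \<open>auto simp: hh_eq\<close>)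
  qed
qed

lemma hh_bound:
  assumes d: "\<delta> > 0"
  shows "\<bar>hh \<delta> t\<bar> \<le> t\<^sup>2 / \<delta>"
proof -
  have "t - \<delta>/2 \<le> t\<^sup>2/\<delta>" if "t > \<delta>"
  proof -
    have "t * \<delta> \<le> t * t" using that d by (intro mult_left_mono) auto
    then have "t \<le> t\<^sup>2/\<delta>" using d by (simp add: field_simps power2_eq_square)
    then show ?thesis using d by linarith
  qed
  moreover have "t\<^sup>2/(2*\<delta>) \<le> t\<^sup>2/\<delta>" using d
    by (simp add: divide_left_mono)
  ultimately show ?thesis using d by (auto simp: hh_eq)
qed

lemma hd_cont: "\<delta> > 0 \<Longrightarrow> continuous_on UNIV (hd \<delta>)"
  unfolding hd_def by (intro continuous_intros) auto

lemma hd0: "\<delta> > 0 \<Longrightarrow> hd \<delta> 0 = 0" by (simp add: hd_def)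



definition C1w :: "('a::real_normed_vector \<Rightarrow> 'b::real_normed_vector) \<Rightarrow> ('a \<Rightarrow> 'a \<Rightarrow>\<^sub>L 'b) \<Rightarrow> bool" where
  "C1w f f' \<longleftrightarrow> (\<forall>x. (f has_derivative blinfun_apply (f' x)) (at x)) \<and> continuous_on UNIV f'"

lemma norm_inner_left_sgn: "norm (blinfun_inner_left (sgn (y::'a::real_inner))) \<le> 1"
proof (rule norm_blinfun_bound)
  fix x :: 'a
  have "\<bar>x \<bullet> sgn y\<bar> \<le> norm x * norm (sgn y)" by (rule Cauchy_Schwarz_ineq2)
  also have "\<dots> \<le> norm x * 1" by (intro mult_left_mono) (auto simp: norm_sgn)
  finally show "norm (blinfun_inner_left (sgn y) x) \<le> 1 * norm x" by simp
qed simp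

lemma scalar_C1:
  fixes L :: "'a::real_inner \<Rightarrow>\<^sub>L real" and c \<delta> :: real
  assumes d: "\<delta> > 0"
  shows "C1w (\<lambda>y. hh \<delta> (L y - c * norm y))
             (\<lambda>y. hd \<delta> (L y - c * norm y) *\<^sub>R (L - c *\<^sub>R blinfun_inner_left (sgn y)))"
proof -
  define K where "K = norm L + \<bar>c\<bar>"
  have K0: "K \<ge> 0" unfolding K_def by simp
  have phib: "\<bar>L y - c * norm y\<bar> \<le> K * norm y" for y
  proof -
    have "\<bar>L y\<bar> \<le> norm L * norm y" using norm_blinfun[of L y] by simp
    moreover have "\<bar>L y - c * norm y\<bar> \<le> \<bar>L y\<bar> + \<bar>c\<bar> * norm y"
      using abs_triangle_ineq4[of "L y" "c * norm y"] by (simp add: abs_mult)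
    ultimately show ?thesis unfolding K_def by (simp add: distrib_right)
  qed
  have der: "((\<lambda>y. hh \<delta> (L y - c * norm y)) has_derivative
        blinfun_apply (hd \<delta> (L y - c * norm y) *\<^sub>R (L - c *\<^sub>R blinfun_inner_left (sgn y)))) (at y)" for y
  proof (cases "y = 0")
    case False
    have n: "(norm has_derivative (\<lambda>h. h \<bullet> sgn y)) (at y)"
      using has_derivative_norm[OF False] .
    have Ld: "(blinfun_apply L has_derivative blinfun_apply L) (at y)"
      by (rule bounded_linear_imp_has_derivative) (rule blinfun.bounded_linear_right)
    have phid: "((\<lambda>y. L y - c * norm y) has_derivative (\<lambda>v. L v - c * (v \<bullet> sgn y))) (at y)"
      by (intro has_derivative_diff Ld has_derivative_mult_right n)
    have hd': "(hh \<delta> has_derivative (*) (hd \<delta> (L y - c * norm y))) (at (L y - c * norm y))"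
      using hh_deriv[OF d] unfolding has_field_derivative_def .
    have "((\<lambda>y. hh \<delta> (L y - c * norm y)) has_derivative
          (\<lambda>v. hd \<delta> (L y - c * norm y) * (L v - c * (v \<bullet> sgn y)))) (at y)"
      using has_derivative_compose[OF phid hd'] .
    moreover have "blinfun_apply (hd \<delta> (L y - c * norm y) *\<^sub>R (L - c *\<^sub>R blinfun_inner_left (sgn y)))
        = (\<lambda>v. hd \<delta> (L y - c * norm y) * (L v - c * (v \<bullet> sgn y)))"
      by (simp add: fun_eq_iff scaleR_blinfun.rep_eq minus_blinfun.rep_eq)
    ultimately show ?thesis by simp
  next
    case True
    have z: "hd \<delta> (L y - c * norm y) = 0" using True hd0[OF d] by simp
    have "((\<lambda>y. hh \<delta> (L y - c * norm y)) has_derivative (\<lambda>_. 0)) (at 0)"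
      unfolding has_derivative_at
    proof (intro conjI)
      show "bounded_linear (\<lambda>_. 0::real)" by simp
      have "((\<lambda>h::'a. K\<^sup>2 / \<delta> * norm h) \<longlongrightarrow> K\<^sup>2 / \<delta> * norm (0::'a)) (at 0)"
        using tendsto_norm[OF tendsto_ident_at[of "0::'a" UNIV]] by (intro tendsto_mult_left) simp
      then have t: "((\<lambda>h. K\<^sup>2 / \<delta> * norm h) \<longlongrightarrow> 0) (at (0::'a))" by simp
      show "(\<lambda>h. norm (hh \<delta> (L (0 + h) - c * norm (0 + h)) - hh \<delta> (L 0 - c * norm 0) - 0) / norm h) \<midarrow>0\<rightarrow> 0"
      proof (rule Lim_null_comparison[OF _ t], rule always_eventually, intro allI)
        fix h :: 'a
        have h0: "hh \<delta> 0 = 0" using d by (simp add: hh_eq)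
        have "\<bar>hh \<delta> (L h - c * norm h)\<bar> \<le> (L h - c * norm h)\<^sup>2 / \<delta>" by (rule hh_bound[OF d])
        also have "\<dots> \<le> (K * norm h)\<^sup>2 / \<delta>"
        proof (rule divide_right_mono)
          have "\<bar>L h - c * norm h\<bar> \<le> \<bar>K * norm h\<bar>" using phib[of h] K0 by simp
          then show "(L h - c * norm h)\<^sup>2 \<le> (K * norm h)\<^sup>2" by (simp add: abs_le_square_iff)
        qed (use d in simp)
        finally have b: "\<bar>hh \<delta> (L h - c * norm h)\<bar> \<le> (K * norm h)\<^sup>2 / \<delta>" .
        show "norm (norm (hh \<delta> (L (0 + h) - c * norm (0 + h)) - hh \<delta> (L 0 - c * norm 0) - 0) / norm h) \<le> K\<^sup>2 / \<delta> * norm h"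
        proof (cases "h = 0")
          case True then show ?thesis by simp
        next
          case False
          then have "norm h > 0" by simp
          then show ?thesis using b h0 d
            by (simp add: field_simps power2_eq_square blinfun.zero_right)
        qed
      qed
    qed
    then show ?thesis using True z by (simp add: zero_blinfun.rep_eq)
  qed
  have cont: "isCont (\<lambda>y. hd \<delta> (L y - c * norm y) *\<^sub>R (L - c *\<^sub>R blinfun_inner_left (sgn y))) y" for y
  proof (cases "y = 0")
    case False
    have "isCont (\<lambda>y. L y - c * norm y) y" by (intro continuous_intros)
    then have hc: "isCont (\<lambda>y. hd \<delta> (L y - c * norm y)) y"
      by (rule isCont_o2) (use hd_cont[OF d] in \<open>simp add: continuous_on_eq_continuous_at\<close>)
    have "isCont (\<lambda>y. blinfun_inner_left (sgn y)) y"
      by (rule isCont_o2[where g=blinfun_inner_left], rule isCont_sgn, rule continuous_ident)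
         (use False in \<open>auto intro: linear_continuous_at bounded_linear_blinfun_inner_left\<close>)
    then show ?thesis using hc False by (intro continuous_intros)
  next
    case True
    have "isCont (\<lambda>y. L y - c * norm y) 0" by (intro continuous_intros)
    then have hc: "isCont (\<lambda>y. hd \<delta> (L y - c * norm y)) 0"
      by (rule isCont_o2) (use hd_cont[OF d] in \<open>simp add: continuous_on_eq_continuous_at\<close>)
    then have "((\<lambda>y. \<bar>hd \<delta> (L y - c * norm y)\<bar> * K) \<longlongrightarrow> \<bar>hd \<delta> (L 0 - c * norm 0)\<bar> * K) (at 0)"
      by (intro tendsto_intros) (simp add: isCont_def)
    then have t: "((\<lambda>y. \<bar>hd \<delta> (L y - c * norm y)\<bar> * K) \<longlongrightarrow> 0) (at 0)"
      using hd0[OF d] by simp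
    have "((\<lambda>y. hd \<delta> (L y - c * norm y) *\<^sub>R (L - c *\<^sub>R blinfun_inner_left (sgn y))) \<longlongrightarrow> 0) (at 0)"
    proof (rule Lim_null_comparison[OF _ t], rule always_eventually, intro allI)
      fix y :: 'a
      have "norm (L - c *\<^sub>R blinfun_inner_left (sgn y)) \<le> norm L + norm (c *\<^sub>R blinfun_inner_left (sgn y))"
        by (rule norm_triangle_ineq4)
      also have "\<dots> \<le> K" unfolding K_def using norm_inner_left_sgn[of y]
        by (simp add: mult_left_le)
      finally show "norm (hd \<delta> (L y - c * norm y) *\<^sub>R (L - c *\<^sub>R blinfun_inner_left (sgn y))) \<le> \<bar>hd \<delta> (L y - c * norm y)\<bar> * K"
        by (simp add: mult_left_mono)
    qed
    then show ?thesis using True hd0[OF d] by (simp add: isCont_def)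
  qed
  show ?thesis unfolding C1w_def using der cont by (auto intro: continuous_at_imp_continuous_on)
qed

lemma C1w_compose:
  assumes "C1w G G'"
  shows "C1w (\<lambda>x. G (blinfun_apply P x)) (\<lambda>x. G' (P x) o\<^sub>L P)"
  unfolding C1w_def
proof (intro conjI allI)
  fix x
  have Pd: "(blinfun_apply P has_derivative blinfun_apply P) (at x)"
    by (rule bounded_linear_imp_has_derivative) (rule blinfun.bounded_linear_right)
  have Gd: "(G has_derivative blinfun_apply (G' (P x))) (at (P x))" using assms unfolding C1w_def by blast
  show "((\<lambda>x. G (blinfun_apply P x)) has_derivative blinfun_apply (G' (P x) o\<^sub>L P)) (at x)"
    using has_derivative_compose[OF Pd Gd] by (simp add: blinfun_compose.rep_eq comp_def)
next
  have "continuous_on UNIV (\<lambda>x. G' (P x))"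
    using assms unfolding C1w_def
    by (intro continuous_on_compose2[of UNIV G' UNIV "blinfun_apply P"]) (auto intro: continuous_intros)
  then show "continuous_on UNIV (\<lambda>x. G' (P x) o\<^sub>L P)" by (intro continuous_intros)
qed

lemma C1w_sum:
  fixes f :: "'i \<Rightarrow> 'a::real_normed_vector \<Rightarrow> real" and b :: "'i \<Rightarrow> 'b::real_normed_vector"
  assumes "finite I" "\<And>i. i \<in> I \<Longrightarrow> C1w (f i) (f' i)"
  shows "C1w (\<lambda>x. \<Sum>i\<in>I. f i x *\<^sub>R b i) (\<lambda>x. \<Sum>i\<in>I. blinfun_scaleR_left (b i) o\<^sub>L f' i x)"
  unfolding C1w_def
proof (intro conjI allI)
  fix x
  have "((\<lambda>x. \<Sum>i\<in>I. f i x *\<^sub>R b i) has_derivative (\<lambda>v. \<Sum>i\<in>I. f' i x v *\<^sub>R b i)) (at x)"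
    using assms unfolding C1w_def by (intro has_derivative_sum has_derivative_scaleR_left) auto
  moreover have "blinfun_apply (\<Sum>i\<in>I. blinfun_scaleR_left (b i) o\<^sub>L f' i x) = (\<lambda>v. \<Sum>i\<in>I. f' i x v *\<^sub>R b i)"
    by (simp add: fun_eq_iff blinfun.sum_left)
  ultimately show "((\<lambda>x. \<Sum>i\<in>I. f i x *\<^sub>R b i) has_derivative blinfun_apply (\<Sum>i\<in>I. blinfun_scaleR_left (b i) o\<^sub>L f' i x)) (at x)"
    by simp
next
  show "continuous_on UNIV (\<lambda>x. \<Sum>i\<in>I. blinfun_scaleR_left (b i) o\<^sub>L f' i x)"
    using assms unfolding C1w_def by (intro continuous_intros) auto
qed

lemma C1w_imp: "C1w f f' \<Longrightarrow> C1_everywhere f"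
  unfolding C1w_def C1_everywhere_def by blast

theorem theorem2:
  fixes k :: nat and \<delta> :: real
  assumes "CARD('n::finite) \<ge> 2"
    and "1 \<le> k" and "k \<le> CARD('n) - 1"
    and "\<delta> > 0"
  shows "C1_everywhere (\<lambda>x :: real ^ 'n. \<chi> i. huber \<delta> (stat_top k x $ i) / \<delta>)"
proof -
  define q where "q = gauss_quantile (1 - real k / real CARD('n))"
  define c where "c = q / sqrt (real CARD('n) - 1)"
  have blP: "bounded_linear (\<lambda>x::real^'n. x - vmean x *\<^sub>R 1)"
  proof -
    have "bounded_linear (\<lambda>x::real^'n. (\<Sum>i\<in>UNIV. x $ i) / real CARD('n))"
      by (rule bounded_linear_compose[OF bounded_linear_divide bounded_linear_sum[OF bounded_linear_vec_nth]])
    then have "bounded_linear (vmean :: real^'n \<Rightarrow> real)" unfolding vmean_def[abs_def] .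
    then show ?thesis by (intro bounded_linear_sub bounded_linear_ident bounded_linear_compose[OF bounded_linear_scaleR_left])
  qed
  define P :: "(real^'n) \<Rightarrow>\<^sub>L (real^'n)" where "P = Blinfun (\<lambda>x. x - vmean x *\<^sub>R 1)"
  have Pa: "blinfun_apply P x = x - vmean x *\<^sub>R 1" for x
    unfolding P_def using blP by (simp add: bounded_linear_Blinfun_apply)
  define Li :: "'n \<Rightarrow> (real^'n) \<Rightarrow>\<^sub>L real" where "Li i = Blinfun (\<lambda>y. y $ i)" for i
  have Lia: "blinfun_apply (Li i) y = y $ i" for i y
    unfolding Li_def by (simp add: bounded_linear_Blinfun_apply bounded_linear_vec_nth)
  have normP: "norm (P x) = sqrt (\<Sum>j\<in>UNIV. (x $ j - vmean x)\<^sup>2)" for x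
    by (simp add: Pa norm_vec_def L2_set_def power2_abs)
  have stdP: "vstd x = norm (P x) / sqrt (real CARD('n) - 1)" for x
    unfolding vstd_def normP by (simp add: real_sqrt_divide)
  have comp: "huber \<delta> (stat_top k x $ i) / \<delta> = hh \<delta> (Li i (P x) - c * norm (P x))" for x i
    unfolding hh_def stat_top_def soft_threshold_def stat_threshold_def Lia Pa stdP c_def q_def
    by (simp add: algebra_simps)
  have feq: "(\<lambda>x :: real ^ 'n. \<chi> i. huber \<delta> (stat_top k x $ i) / \<delta>)
      = (\<lambda>x. \<Sum>i\<in>UNIV. hh \<delta> (Li i (P x) - c * norm (P x)) *\<^sub>R axis i 1)"
    by (rule ext) (simp add: vec_eq_iff comp axis_def if_distrib cong: if_cong)
  have "C1w (\<lambda>x. \<Sum>i\<in>UNIV. hh \<delta> (Li i (P x) - c * norm (P x)) *\<^sub>R axis i (1::real))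
      (\<lambda>x. \<Sum>i\<in>UNIV. blinfun_scaleR_left (axis i 1) o\<^sub>L
         ((\<lambda>y. hd \<delta> (Li i y - c * norm y) *\<^sub>R (Li i - c *\<^sub>R blinfun_inner_left (sgn y))) (P x) o\<^sub>L P))"
    by (intro C1w_sum C1w_compose[where G="\<lambda>y. hh \<delta> (Li _ y - c * norm y)"] scalar_C1 assms(4)) auto
  then show ?thesis unfolding feq by (rule C1w_imp)
qed

end
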